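(* Consider the two-agent series component maintenance game with prior probabilities $p_1,p_2\in(0,1)$ that components $1,2$ work. Then there exist repair costs $C_1,C_2$ for which the Price of Anarchy without subsidy satisfies $\mathrm{PoA}\ge \frac{2}{p_1+p_2}$. More generally, for the $n$-agent series component maintenance game with prior probabilities $p_1,\dots,p_n\in(0,1)$, there exist repair costs $C_1,\dots,C_n$ for which $\mathrm{PoA}\ge \tilde H/\tilde G^{\,n}$, where $\tilde H=\frac{n}{\sum_i 1/p_i}$ and $\tilde G=(\prod_i p_i)^{1/n}$ are the harmonic and geometric means of $p_1,\dots,p_n$.
   Context: Component maintenance game: agent $i\in[n]$ owns component $i$ with random binary state $x_i\in\{0,1\}$ ($1$ = working), the components being independent with $\Pr[x_i=1]=p_i$. Each agent chooses $s_i\in\{0,1\}$ ($1$ = repair, $0$ = do nothing); after the actions the component state is $x_i'=\max\{x_i,s_i\}$. The system state is $\phi(\bm{x}')$ for a fixed Boolean function $\phi$; in the series system $\phi(\bm{x})=x_1\wedge\dots\wedge x_n$. Agent $i$ has repair cost $C_i\in\mathbb{R}$ and expected cost $l_i(s)=C_is_i+1-\mathbb{E}[\phi(\bm{x}'(s))]$; the social cost is $\sum_i l_i(s)$ and $\mathsf{OPT}$ its minimum over joint actions. The Price of Anarchy without subsidy is $\mathrm{PoA}=\max_{s\in\mathcal{S}_{NE}}\mathrm{cost}(s)/\mathsf{OPT}$, where $\mathcal{S}_{NE}$ is the set of pure Nash equilibria. *)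

theory Defs
  imports Complex_Main
begin

text \<open>Agents are indexed 0..n-1. A (pure) joint action / a component state vector is a
  boolean vector nat \<Rightarrow> bool that is False outside {0..<n} (True = 1).\<close>

definition profiles :: "nat \<Rightarrow> (nat \<Rightarrow> bool) set" where
  "profiles n = {s. \<forall>i\<ge>n. \<not> s i}"

definition series :: "nat \<Rightarrow> (nat \<Rightarrow> bool) \<Rightarrow> bool" where
  "series n x \<longleftrightarrow> (\<forall>i<n. x i)"

definition state_prob :: "nat \<Rightarrow> (nat \<Rightarrow> real) \<Rightarrow> (nat \<Rightarrow> bool) \<Rightarrow> real" where
  "state_prob n p x = (\<Prod>i<n. if x i then p i else 1 - p i)"

definition exp_system :: "nat \<Rightarrow> (nat \<Rightarrow> real) \<Rightarrow> (nat \<Rightarrow> bool) \<Rightarrow> real" where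
  "exp_system n p s =
     (\<Sum>x\<in>profiles n. state_prob n p x * (if series n (\<lambda>i. x i \<or> s i) then 1 else 0))"

definition indiv_cost ::
  "nat \<Rightarrow> (nat \<Rightarrow> real) \<Rightarrow> (nat \<Rightarrow> real) \<Rightarrow> (nat \<Rightarrow> bool) \<Rightarrow> nat \<Rightarrow> real" where
  "indiv_cost n p C s i = (if s i then C i else 0) + 1 - exp_system n p s"

definition social_cost ::
  "nat \<Rightarrow> (nat \<Rightarrow> real) \<Rightarrow> (nat \<Rightarrow> real) \<Rightarrow> (nat \<Rightarrow> bool) \<Rightarrow> real" where
  "social_cost n p C s = (\<Sum>i<n. indiv_cost n p C s i)"

definition OPT :: "nat \<Rightarrow> (nat \<Rightarrow> real) \<Rightarrow> (nat \<Rightarrow> real) \<Rightarrow> real" where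
  "OPT n p C = Min (social_cost n p C ` profiles n)"

definition is_NE ::
  "nat \<Rightarrow> (nat \<Rightarrow> real) \<Rightarrow> (nat \<Rightarrow> real) \<Rightarrow> (nat \<Rightarrow> bool) \<Rightarrow> bool" where
  "is_NE n p C s \<longleftrightarrow> s \<in> profiles n \<and>
     (\<forall>i<n. \<forall>b. indiv_cost n p C s i \<le> indiv_cost n p C (s(i := b)) i)"

definition NE_set :: "nat \<Rightarrow> (nat \<Rightarrow> real) \<Rightarrow> (nat \<Rightarrow> real) \<Rightarrow> (nat \<Rightarrow> bool) set" where
  "NE_set n p C = {s. is_NE n p C s}"

definition PoA :: "nat \<Rightarrow> (nat \<Rightarrow> real) \<Rightarrow> (nat \<Rightarrow> real) \<Rightarrow> real" where
  "PoA n p C = Max ((\<lambda>s. social_cost n p C s / OPT n p C) ` NE_set n p C)"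

end

theory Submission
  imports Defs
begin

lemma profiles_Suc:
  "profiles (Suc n) = (\<lambda>x. x(n:=False)) ` profiles n \<union> (\<lambda>x. x(n:=True)) ` profiles n"
proof (intro equalityI subsetI)
  fix x assume x: "x \<in> profiles (Suc n)"
  have 1: "x(n:=False) \<in> profiles n" using x by (auto simp: profiles_def)
  have 2: "x = (x(n:=False))(n := x n)" by simp
  show "x \<in> (\<lambda>x. x(n:=False)) ` profiles n \<union> (\<lambda>x. x(n:=True)) ` profiles n"
  proof (cases "x n")
    case True
    then have "x = (x(n:=False))(n := True)" using 2 by simp
    then show ?thesis using 1 by blast
  next
    case False
    then have "x = (x(n:=False))(n := False)" using 2 by simp
    then show ?thesis using 1 by blast
  qed
next
  fix x assume "x \<in> (\<lambda>x. x(n:=False)) ` profiles n \<union> (\<lambda>x. x(n:=True)) ` profiles n"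
  then show "x \<in> profiles (Suc n)" by (auto simp: profiles_def)
qed

lemma finite_profiles: "finite (profiles n)"
proof (induction n)
  case 0
  have "profiles 0 = {\<lambda>_. False}" by (auto simp: profiles_def)
  then show ?case by simp
next
  case (Suc n) then show ?case by (simp add: profiles_Suc)
qed

lemma sum_prod_profiles:
  fixes g :: "nat \<Rightarrow> bool \<Rightarrow> real"
  shows
  "(\<Sum>x\<in>profiles n. \<Prod>i<n. g i (x i)) = (\<Prod>i<n. g i True + g i False)"
proof (induction n)
  case 0
  have "profiles 0 = {\<lambda>_. False}" by (auto simp: profiles_def)
  then show ?case by simp
next
  case (Suc n)
  have inj: "inj_on (\<lambda>x. x(n:=b)) (profiles n)" for b
    by (auto simp: inj_on_def profiles_def fun_eq_iff)
  have disj: "(\<lambda>x. x(n:=False)) ` profiles n \<inter> (\<lambda>x. x(n:=True)) ` profiles n = {}"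
    by (auto dest!: fun_cong[where x=n])
  have img: "(\<Sum>x\<in>(\<lambda>x. x(n:=b)) ` profiles n. \<Prod>i<Suc n. g i (x i))
      = (\<Sum>x\<in>profiles n. \<Prod>i<n. g i (x i)) * g n b" for b
  proof -
    have "(\<Sum>x\<in>(\<lambda>x. x(n:=b)) ` profiles n. \<Prod>i<Suc n. g i (x i))
        = (\<Sum>x\<in>profiles n. \<Prod>i<Suc n. g i ((x(n:=b)) i))"
      by (rule sum.reindex[OF inj, unfolded comp_def])
    also have "\<dots> = (\<Sum>x\<in>profiles n. (\<Prod>i<n. g i (x i)) * g n b)"
      by (intro sum.cong refl) (simp add: lessThan_Suc mult.commute)
    finally show ?thesis by (simp add: sum_distrib_right)
  qed
  have "(\<Sum>x\<in>profiles (Suc n). \<Prod>i<Suc n. g i (x i))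
      = (\<Sum>x\<in>(\<lambda>x. x(n:=False)) ` profiles n. \<Prod>i<Suc n. g i (x i))
      + (\<Sum>x\<in>(\<lambda>x. x(n:=True)) ` profiles n. \<Prod>i<Suc n. g i (x i))"
    unfolding profiles_Suc by (rule sum.union_disjoint) (auto simp: finite_profiles disj)
  also have "\<dots> = (\<Prod>i<n. g i True + g i False) * (g n False + g n True)"
    unfolding img Suc.IH by (simp add: distrib_left)
  finally show ?case by (simp add: lessThan_Suc mult.commute add.commute)
qed

lemma prod_ind:
  "(\<Prod>i<(n::nat). if Q i then (1::real) else 0) = (if \<forall>i<n. Q i then 1 else 0)"
  by (induction n) (auto simp: less_Suc_eq)

lemma exp_system_formula:
  "exp_system n p s = (\<Prod>i<n. if s i then 1 else p i)"
proof -
  have "exp_system n p s = (\<Sum>x\<in>profiles n. \<Prod>i<n.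
      (if x i then p i else 1 - p i) * (if x i \<or> s i then 1 else 0))"
    unfolding exp_system_def state_prob_def series_def
    by (intro sum.cong refl) (simp add: prod.distrib prod_ind)
  also have "\<dots> = (\<Prod>i<n. if s i then 1 else p i)"
    by (subst sum_prod_profiles) (intro prod.cong refl, auto)
  finally show ?thesis .
qed

theorem proposition2:
  fixes n :: nat and p :: "nat \<Rightarrow> real"
  assumes "n \<ge> 1"
    and "\<forall>i<n. 0 < p i \<and> p i < 1"
  shows "\<exists>C :: nat \<Rightarrow> real.
           NE_set n p C \<noteq> {} \<and> OPT n p C > 0 \<and>
           PoA n p C \<ge> (real n / (\<Sum>i<n. 1 / p i)) / (root n (\<Prod>i<n. p i)) ^ n"
proof -
  note pp = assms(2)
  define P where "P = (\<Prod>i<n. p i)"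
  define C where "C = (\<lambda>i. P / p i - P)"
  define S where "S = (\<Sum>i<n. 1 / p i)"
  have Ppos: "P > 0" unfolding P_def using pp by (intro prod_pos) auto
  have Psplit: "P = p i * (\<Prod>j\<in>{..<n}-{i}. p j)" if "i < n" for i
    unfolding P_def using that by (simp add: prod.remove)
  have rest_le: "(\<Prod>j\<in>{..<n}-{i}. f j) \<le> 1" if "\<forall>j<n. 0 \<le> f j \<and> f j \<le> 1" for i and f :: "nat \<Rightarrow> real"
    using that by (intro prod_le_1) auto
  have Ple: "P \<le> p i" if "i < n" for i
  proof -
    have "(\<Prod>j\<in>{..<n}-{i}. p j) \<le> 1" using pp by (intro rest_le) (auto simp: less_imp_le)
    then show ?thesis using Psplit[OF that] pp that
      by (metis less_imp_le mult_left_le)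
  qed
  have Cpos: "C i > 0" if "i < n" for i
  proof -
    have "P / p i > P" using Ppos pp that by (simp add: less_divide_eq)
    then show ?thesis unfolding C_def by simp
  qed
  have fin: "finite (profiles n)" by (rule finite_profiles)
  define s0 where "s0 = (\<lambda>i::nat. False)"
  define s1 where "s1 = (\<lambda>i. i < n)"
  have s0p: "s0 \<in> profiles n" by (simp add: s0_def profiles_def)
  have s1p: "s1 \<in> profiles n" by (simp add: s1_def profiles_def)
  have E0: "exp_system n p s0 = P" by (simp add: exp_system_formula s0_def P_def)
  have E1: "exp_system n p s1 = 1" by (simp add: exp_system_formula s1_def)
  have Ei: "exp_system n p (s0(i:=True)) = P / p i" if "i < n" for i
  proof -
    have "exp_system n p (s0(i:=True)) = (\<Prod>j<n. if j = i then 1 else p j)"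
      unfolding exp_system_formula s0_def by (intro prod.cong) auto
    also have "\<dots> = (\<Prod>j\<in>{..<n}-{i}. p j)"
      using that by (simp add: prod.remove)
    also have "\<dots> = P / p i" using Psplit[OF that] pp that by force
    finally show ?thesis .
  qed
  have NE: "s0 \<in> NE_set n p C"
    unfolding NE_set_def is_NE_def
  proof (intro CollectI conjI s0p allI impI)
    fix i b assume i: "i < n"
    show "indiv_cost n p C s0 i \<le> indiv_cost n p C (s0(i := b)) i"
    proof (cases b)
      case True
      have "\<not> s0 i" by (simp add: s0_def)
      then show ?thesis using i True by (simp add: indiv_cost_def E0 Ei[OF i] C_def)
    next
      case False
      then have "s0(i:=b) = s0" by (auto simp: s0_def)
      then show ?thesis by simp
    qed
  qed
  have SC0: "social_cost n p C s0 = n * (1 - P)"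
    unfolding social_cost_def indiv_cost_def E0 by (simp add: s0_def)
  have SC1: "social_cost n p C s1 = (\<Sum>i<n. C i)"
    unfolding social_cost_def indiv_cost_def E1 by (simp add: s1_def)
  have SCpos: "social_cost n p C s > 0" if s: "s \<in> profiles n" for s
  proof (cases "\<forall>i<n. s i")
    case True
    have "social_cost n p C s = (\<Sum>i<n. C i)"
    proof -
      have "exp_system n p s = 1" using True by (simp add: exp_system_formula)
      then show ?thesis using True by (simp add: social_cost_def indiv_cost_def)
    qed
    moreover have "(\<Sum>i<n. C i) > 0"
      using Cpos assms(1) by (intro sum_pos) (auto simp: lessThan_empty_iff)
    ultimately show ?thesis by simp
  next
    case False
    then obtain j where j: "j < n" "\<not> s j" by auto
    let ?f = "\<lambda>i. if s i then 1 else p i"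
    have "exp_system n p s = ?f j * (\<Prod>i\<in>{..<n}-{j}. ?f i)"
      using j by (simp add: exp_system_formula prod.remove)
    moreover have "(\<Prod>i\<in>{..<n}-{j}. ?f i) \<le> 1"
      using pp by (intro rest_le) (auto simp: less_imp_le)
    moreover have "(\<Prod>i\<in>{..<n}-{j}. ?f i) \<ge> 0"
      using pp by (intro prod_nonneg) (auto simp: less_imp_le)
    ultimately have "exp_system n p s \<le> p j" using j pp
      by (simp add: mult_left_le less_imp_le)
    then have Elt: "exp_system n p s < 1" using pp j by force
    have "social_cost n p C s = (\<Sum>i<n. (if s i then C i else 0)) + n * (1 - exp_system n p s)"
      unfolding social_cost_def indiv_cost_def by (simp add: sum.distrib sum_subtractf right_diff_distrib)
    moreover have "(\<Sum>i<n. (if s i then C i else 0)) \<ge> 0"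
      using Cpos by (intro sum_nonneg) (auto simp: less_imp_le)
    moreover have "n * (1 - exp_system n p s) > 0" using Elt assms(1) by simp
    ultimately show ?thesis by linarith
  qed
  have OPTpos: "OPT n p C > 0"
    unfolding OPT_def using fin s1p SCpos by (subst Min_gr_iff) auto
  have OPTle: "OPT n p C \<le> (\<Sum>i<n. C i)"
    unfolding OPT_def using fin s1p SC1 by (metis Min_le finite_imageI image_eqI)
  have finNE: "finite (NE_set n p C)"
    by (rule finite_subset[OF _ fin]) (auto simp: NE_set_def is_NE_def)
  have PoAge: "PoA n p C \<ge> n * (1 - P) / OPT n p C"
    unfolding PoA_def using finNE NE SC0 by (metis Max_ge finite_imageI image_eqI)
  have sumC: "(\<Sum>i<n. C i) = P * S - n * P"
    by (simp add: C_def S_def sum_subtractf sum_distrib_left)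
  have PS: "P * S \<le> n"
  proof -
    have "P * S = (\<Sum>i<n. P / p i)" by (simp add: S_def sum_distrib_left)
    also have "\<dots> \<le> (\<Sum>i<n. 1)"
      using Ple pp by (intro sum_mono) (simp add: divide_le_eq)
    finally show ?thesis by simp
  qed
  have Spos: "S > 0" unfolding S_def using pp assms(1) by (intro sum_pos) (auto simp: lessThan_empty_iff)
  have sCpos: "(\<Sum>i<n. C i) > 0"
    using Cpos assms(1) by (intro sum_pos) (auto simp: lessThan_empty_iff)
  have rootP: "root n P ^ n = P" using Ppos assms(1) by (simp add: real_root_pow_pos)
  have num: "n * (1 - P) \<ge> 0" proof -
    have "P \<le> p 0" "p 0 < 1" using Ple[of 0] pp assms(1) by auto
    then show ?thesis by simp
  qed
  have step1: "n * (1 - P) / OPT n p C \<ge> n * (1 - P) / (\<Sum>i<n. C i)"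
    using OPTpos OPTle num by (intro divide_left_mono) auto
  have step2: "n * (1 - P) / (\<Sum>i<n. C i) \<ge> (n / S) / P"
  proof -
    have "(n / S) / P = n / (S * P)" by simp
    also have "\<dots> \<le> n * (1 - P) / (P * S - n * P)"
    proof -
      have "n * (P * S - n * P) \<le> n * (1 - P) * (S * P)"
      proof -
        have "P * S - n * P \<le> (1 - P) * (S * P)"
          using PS Ppos by (simp add: algebra_simps)
        then show ?thesis by (simp add: mult_left_mono mult.assoc)
      qed
      moreover have "P * S - n * P > 0" using sCpos sumC by simp
      ultimately show ?thesis using Spos Ppos by (simp add: divide_simps mult.commute)
    qed
    finally show ?thesis using sumC by simp
  qed
  show ?thesis
    apply (rule exI[of _ C])
    using NE OPTpos PoAge step1 step2 rootP unfolding S_def[symmetric] P_def[symmetric]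
    by auto
qed

end
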